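(* Let $\mathbb{Z}$ be a finite-dimensional Euclidean space, $L>0$, and let $G:\mathbb{Z}\to\mathbb{Z}$ be $\frac{1}{L}$-co-coercive. Assume there exists $z^*\in\mathbb{Z}$ with $G(z^* )=0$. Let $z^0\in\mathbb{Z}$, let $\gamma_k\ge 0$ ($k\ge0$), and let $\{z^k\}$ be generated by the inexact Halpern iteration: for $k\ge 0$, choose any $\tilde z^k\in\mathbb{Z}$ with $\|G(z^k)-\tilde z^k\|\le\gamma_k$ and set $z^{k+1}=\beta_k z^0+(1-\beta_k)z^k-\eta_k\tilde z^k$, where $\beta_k=1/(k+2)$ and $\eta_k=(1-\beta_k)/L$. Then for every solution $z^*$ with $G(z^* )=0$ and all $k\ge0$, \[ \|G(z^k)\|^2\le \frac{\Big(7L\|z^0-z^*\|+10\sqrt{\sum_{i=0}^{k-1}(i+1)^2\gamma_i^2}\Big)^2}{(k+1)(k+2)}, \qquad \|z^{k+1}-z^k\|^2\le \frac{8\Big(7L\|z^0-z^*\|+11\sqrt{\sum_{i=0}^{k}(i+1)^2\gamma_i^2}\Big)^2}{L^2(k+1)(k+2)}. \] (An empty sum equals $0$.)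
   Context: A map $G:\mathbb{Z}\to\mathbb{Z}$ is $c$-co-coercive ($c>0$) if $\langle G(x_1)-G(x_2),x_1-x_2\rangle\ge c\|G(x_1)-G(x_2)\|^2$ for all $x_1,x_2$. $\|\cdot\|$ is the Euclidean norm. *)

theory Defs
  imports "HOL-Analysis.Analysis"
begin

definition co_coercive :: "real \<Rightarrow> ('a::real_inner \<Rightarrow> 'a) \<Rightarrow> bool" where
  "co_coercive c G \<longleftrightarrow> c > 0 \<and>
     (\<forall>x1 x2. inner (G x1 - G x2) (x1 - x2) \<ge> c * (norm (G x1 - G x2))\<^sup>2)"

end

theory Submission imports Defs begin

lemma scalar_id:
  fixes L a c h iL p1u p0u p10 p1e p0e n0 n1 ne :: real
  assumes "(a+1)*c = a" "L*(a+1)*h = a" "L*iL = 1"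
  shows "L*(a+1)*(c*p1u - h*(p10+p1e)) + a*(a+1)/2*n1 - (L*a*p0u + (a-1)*a/2*n0)
   = -(a*(a+1)/2)*(n1+n0+ne-2*p10+2*p1e-2*p0e) + a*(a+1)/2*ne - a*p0e
     - L*a*(a+1)*((c - 1)*(p1u - p0u) - h*(p10+p1e-n0-p0e) - iL*(n1 - 2*p10 + n0))"
proof -
  have f1: "L*(a+1)*c = L*a" using assms(1) by (metis mult.assoc)
  have e1: "L*(a+1)*(c*p1u - h*(p10+p1e)) = L*a*p1u - a*(p10+p1e)"
  proof -
    have "L*(a+1)*(c*p1u - h*(p10+p1e)) = (L*(a+1)*c)*p1u - (L*(a+1)*h)*(p10+p1e)" by (simp add: algebra_simps)
    then show ?thesis unfolding f1 assms(2) .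
  qed
  have e2: "L*a*(a+1)*((c - 1)*(p1u - p0u) - h*(p10+p1e-n0-p0e) - iL*(n1 - 2*p10 + n0))
     = a*((L*(a+1)*c) - L*(a+1))*(p1u - p0u) - a*(L*(a+1)*h)*(p10+p1e-n0-p0e) - a*(a+1)*(L*iL)*(n1 - 2*p10 + n0)"
    by (simp add: algebra_simps)
  show ?thesis unfolding e1 e2 f1 assms(2) assms(3) by (simp add: field_simps)
qed

lemma key_identity:
  fixes u0 g0 g1 e :: "'a::real_inner" and L a :: real
  assumes "L > 0" "a > 0"
  shows "L*(a+1)*inner g1 ((a/(a+1)) *\<^sub>R u0 - (a/((a+1)*L)) *\<^sub>R (g0+e)) + a*(a+1)/2 * (norm g1)\<^sup>2
     - (L*a*inner g0 u0 + (a-1)*a/2 * (norm g0)\<^sup>2)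
   = -(a*(a+1)/2)*(norm (g1-g0+e))\<^sup>2 + (a*(a+1)/2)*(norm e)\<^sup>2 - a * inner g0 e
     - L*a*(a+1)*(inner (g1-g0) (((a/(a+1)) *\<^sub>R u0 - (a/((a+1)*L)) *\<^sub>R (g0+e)) - u0) - (1/L)*(norm (g1-g0))\<^sup>2)"
proof -
  have v1: "inner g1 (c *\<^sub>R u0 - h *\<^sub>R (g0+e)) = c*inner g1 u0 - h*(inner g1 g0 + inner g1 e)" for c h
    by (simp add: inner_diff_right inner_add_right)
  have v2: "(norm (g1-g0+e))\<^sup>2 = (norm g1)\<^sup>2 + (norm g0)\<^sup>2 + (norm e)\<^sup>2 - 2*inner g1 g0 + 2*inner g1 e - 2*inner g0 e"
    by (simp add: power2_norm_eq_inner inner_diff_right inner_add_right inner_diff_left inner_add_left inner_commute)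
  have v3: "inner (g1-g0) ((c *\<^sub>R u0 - h *\<^sub>R (g0+e)) - u0)
     = (c - 1)*(inner g1 u0 - inner g0 u0) - h*(inner g1 g0 + inner g1 e - (norm g0)\<^sup>2 - inner g0 e)" for c h
    by (simp add: power2_norm_eq_inner inner_diff_right inner_add_right inner_diff_left inner_commute algebra_simps)
  have v4: "(norm (g1-g0))\<^sup>2 = (norm g1)\<^sup>2 - 2*inner g1 g0 + (norm g0)\<^sup>2"
    by (simp add: power2_norm_eq_inner inner_diff_right inner_diff_left inner_commute)
  have h1: "(a+1)*(a/(a+1)) = a" using assms by simp
  have h2: "L*(a+1)*(a/((a+1)*L)) = a" using assms by simp
  have h3: "L*(1/L) = 1" using assms by simp
  from scalar_id[OF h1 h2 h3, of "inner g1 u0" "inner g1 g0" "inner g1 e" "(norm g1)\<^sup>2" "inner g0 u0"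
      "(norm g0)\<^sup>2" "(norm e)\<^sup>2" "inner g0 e"]
  show ?thesis unfolding v1 v2 v3 v4 by simp
qed

lemma sq_help:
  fixes x :: real shows "((real i+1)*x)\<^sup>2 \<le> x\<^sup>2 * ((real i+1)*(real i+2))"
proof -
  have "((real i+1)*x)\<^sup>2 = (x\<^sup>2 * (real i+1)) * (real i+1)" by (simp add: power2_eq_square algebra_simps)
  also have "\<dots> \<le> (x\<^sup>2 * (real i+1)) * (real i+2)" by (intro mult_left_mono) auto
  finally show ?thesis by (simp add: mult.assoc)
qed

lemma nonexp_step:
  fixes v w :: "'a::real_inner" and L :: real
  assumes "L > 0" "inner v w \<ge> (1/L) * (norm v)\<^sup>2"
  shows "norm (w - (1/L) *\<^sub>R v) \<le> norm w"
proof -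
  have "(norm (w - (1/L) *\<^sub>R v))\<^sup>2 = (norm w)\<^sup>2 - 2/L * inner v w + (norm v)\<^sup>2 / L\<^sup>2"
    using assms by (simp only: power2_norm_eq_inner) (simp add: inner_diff_left inner_diff_right inner_commute power2_eq_square field_simps)
  also have "\<dots> \<le> (norm w)\<^sup>2 - 2/L * ((1/L) * (norm v)\<^sup>2) + (norm v)\<^sup>2 / L\<^sup>2"
    using assms by (simp add: field_simps)
  also have "\<dots> \<le> (norm w)\<^sup>2"
    using assms by (simp add: field_simps power2_eq_square)
  finally show ?thesis using power2_le_imp_le by fastforce
qed

lemma sum_inv_sq: "(\<Sum>i<k. 1/(real i+1)^2) \<le> 2 - 2/(real k+1)"
proof (induction k)
  case 0 then show ?case by simp
next
  case (Suc k)
  have "1/(real k+1)^2 \<le> 2/(real k+1) - 2/(real k+2)"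
    by (simp add: divide_simps power2_eq_square)
  then show ?case using Suc by (simp add: add.commute)
qed

lemma amgm: fixes t s :: real shows "t * s \<le> 10 * t\<^sup>2 + s\<^sup>2/40"
proof -
  have "0 \<le> 10 * (t - s/20)\<^sup>2" by simp
  then show ?thesis by (simp add: power2_eq_square field_simps)
qed

lemma quad_contra:
  fixes A r y :: real
  assumes "A \<ge> 0" "r \<ge> 0" "y > 7*A + 10*r"
    and "y\<^sup>2/2 \<le> A*y + 11*r\<^sup>2 + (7*A+10*r)\<^sup>2/20"
  shows False
proof -
  define M where "M = 7*A + 10*r"
  have "(y - M) * ((y+M)/2 - A) > 0" using assms unfolding M_def by (intro mult_pos_pos) auto
  moreover have "A*r \<ge> 0" "A*A \<ge> 0" "r * r \<ge> 0" using assms by auto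
  moreover have "(y - M) * ((y+M)/2 - A) = y*y/2 - A*y - M*M/2 + A*M" by (simp add: field_simps)
  moreover have "M*M = 49*(A*A) + 140*(A*r) + 100*(r*r)" "A*M = 7*(A*A) + 10*(A*r)"
    unfolding M_def by (simp_all add: algebra_simps)
  moreover have "y*y/2 \<le> A*y + 11*(r*r) + M*M/20" using assms(4) unfolding M_def power2_eq_square by simp
  ultimately show False by linarith
qed


theorem theorem1:
  fixes G :: "'a::euclidean_space \<Rightarrow> 'a"
    and L :: real
    and z zt :: "nat \<Rightarrow> 'a"
    and \<gamma> :: "nat \<Rightarrow> real"
    and zstar :: 'a
  assumes L_pos: "L > 0"
    and coco: "co_coercive (1 / L) G"
    and sol_exists: "\<exists>s. G s = 0"
    and gamma_nonneg: "\<And>k. \<gamma> k \<ge> 0"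
    and inexact: "\<And>k. norm (G (z k) - zt k) \<le> \<gamma> k"
    and iter: "\<And>k. z (Suc k) =
        (1 / (real k + 2)) *\<^sub>R z 0 + (1 - 1 / (real k + 2)) *\<^sub>R z k
        - ((1 - 1 / (real k + 2)) / L) *\<^sub>R zt k"
    and zstar_sol: "G zstar = 0"
  shows "(norm (G (z k)))\<^sup>2 \<le>
           (7 * L * norm (z 0 - zstar) + 10 * sqrt (\<Sum>i<k. (real i + 1)\<^sup>2 * (\<gamma> i)\<^sup>2))\<^sup>2
           / ((real k + 1) * (real k + 2))
      \<and> (norm (z (Suc k) - z k))\<^sup>2 \<le>
           8 * (7 * L * norm (z 0 - zstar) + 11 * sqrt (\<Sum>i\<le>k. (real i + 1)\<^sup>2 * (\<gamma> i)\<^sup>2))\<^sup>2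
           / (L\<^sup>2 * (real k + 1) * (real k + 2))"
proof -
  define g where "g k = G (z k)" for k
  define e where "e k = zt k - g k" for k
  define D where "D = norm (z 0 - zstar)"
  define Q where "Q k = (\<Sum>i<k. (real i + 1)\<^sup>2 * (\<gamma> i)\<^sup>2)" for k
  define V where "V k = L*(real k+1)*inner (g k) (z k - z 0) + real k*(real k+1)/2*(norm (g k))\<^sup>2" for k
  have c1: "\<And>x y. inner (G x - G y) (x - y) \<ge> (1/L) * (norm (G x - G y))\<^sup>2"
    using coco unfolding co_coercive_def by auto
  have ne: "norm (e k) \<le> \<gamma> k" for k
    using inexact[of k] unfolding e_def g_def by (simp add: norm_minus_commute)
  have Lne: "L \<noteq> 0" using L_pos by simp
  have D0: "D \<ge> 0" unfolding D_def by simp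
  have LD0: "L * D \<ge> 0" using L_pos D0 by simp
  have Q0: "Q k \<ge> 0" for k unfolding Q_def by (intro sum_nonneg) simp
  have Qmono: "Q i \<le> Q k" if "i \<le> k" for i k
    unfolding Q_def using that by (intro sum_mono2) auto
  have QSuc: "Q (Suc k) = Q k + (real k + 1)\<^sup>2 * (\<gamma> k)\<^sup>2" for k
    unfolding Q_def by simp
  have zrec: "z (Suc k) - z 0 = ((real k+1)/(real k+2)) *\<^sub>R (z k - z 0)
      - (((real k+1)/(real k+2))/L) *\<^sub>R (g k + e k)" for k
  proof -
    have h1: "1 - 1/(real k+2) = (real k+1)/(real k+2)" by (simp add: field_simps)
    have h2: "1/(real k+2) = 1 - (real k+1)/(real k+2)" by (simp add: field_simps)
    have "g k + e k = zt k" unfolding e_def by simp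
    then show ?thesis unfolding iter[of k] h1 h2 by (simp add: algebra_simps)
  qed
  have step: "V (Suc k) \<le> V k + (real k+1)*(real k+2)/2*(\<gamma> k)\<^sup>2 + (real k+1)*\<gamma> k*norm (g k)" for k
  proof -
    define a where "a = real k + 1"
    have a0: "a > 0" unfolding a_def by simp
    have zr: "z (Suc k) - z 0 = (a/(a+1)) *\<^sub>R (z k - z 0) - (a/((a+1)*L)) *\<^sub>R (g k + e k)"
      using zrec[of k] unfolding a_def by (simp add: add.assoc)
    have dd: "(z (Suc k) - z 0) - (z k - z 0) = z (Suc k) - z k" by simp
    have V1: "V (Suc k) = L*(a+1)*inner (g (Suc k)) (z (Suc k) - z 0) + a*(a+1)/2*(norm (g (Suc k)))\<^sup>2"
      unfolding V_def a_def by (simp add: algebra_simps)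
    have V0: "V k = L*a*inner (g k) (z k - z 0) + (a-1)*a/2*(norm (g k))\<^sup>2"
      unfolding V_def a_def by simp
    note ki = key_identity[OF L_pos a0, of "g (Suc k)" "z k - z 0" "g k" "e k"]
    have id: "V (Suc k) - V k = -(a*(a+1)/2)*(norm (g (Suc k) - g k + e k))\<^sup>2 + (a*(a+1)/2)*(norm (e k))\<^sup>2
        - a * inner (g k) (e k)
        - L*a*(a+1)*(inner (g (Suc k) - g k) (z (Suc k) - z k) - (1/L)*(norm (g (Suc k) - g k))\<^sup>2)"
      using ki unfolding V1 V0 zr[symmetric] dd .
    have cc: "inner (g (Suc k) - g k) (z (Suc k) - z k) - (1/L)*(norm (g (Suc k) - g k))\<^sup>2 \<ge> 0"
      using c1[of "z (Suc k)" "z k"] unfolding g_def by simp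
    have t1: "L*a*(a+1)*(inner (g (Suc k) - g k) (z (Suc k) - z k) - (1/L)*(norm (g (Suc k) - g k))\<^sup>2) \<ge> 0"
      using cc L_pos a0 by simp
    have t2: "(a*(a+1)/2)*(norm (e k))\<^sup>2 \<le> (a*(a+1)/2)*(\<gamma> k)\<^sup>2"
      using a0 ne[of k] by (intro mult_left_mono power_mono) auto
    have t3: "- (a * inner (g k) (e k)) \<le> a * \<gamma> k * norm (g k)"
    proof -
      have "- inner (g k) (e k) \<le> norm (g k) * norm (e k)"
        using norm_cauchy_schwarz[of "- g k" "e k"] by simp
      also have "\<dots> \<le> norm (g k) * \<gamma> k" using ne[of k] by (simp add: mult_left_mono)
      finally show ?thesis using a0 mult_left_mono[of "- inner (g k) (e k)" "norm (g k) * \<gamma> k" a]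
        by (simp add: algebra_simps)
    qed
    have t4: "-(a*(a+1)/2)*(norm (g (Suc k) - g k + e k))\<^sup>2 \<le> 0" using a0 by simp
    have "V (Suc k) - V k \<le> (a*(a+1)/2)*(\<gamma> k)\<^sup>2 + a * \<gamma> k * norm (g k)"
      using id t1 t2 t3 t4 by linarith
    moreover have "(real k+1)*(real k+2)/2*(\<gamma> k)\<^sup>2 = (a*(a+1)/2)*(\<gamma> k)\<^sup>2"
      "(real k+1)*\<gamma> k*norm (g k) = a * \<gamma> k * norm (g k)" unfolding a_def by (simp_all add: algebra_simps)
    ultimately show ?thesis by linarith
  qed
  have Vsum: "V k \<le> (\<Sum>i<k. (real i+1)*(real i+2)/2*(\<gamma> i)\<^sup>2 + (real i+1)*\<gamma> i*norm (g i))" for k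
  proof (induction k)
    case 0 then show ?case unfolding V_def by simp
  next
    case (Suc k) then show ?case using step[of k] by simp
  qed
  have lower: "(real k+1)*(real k+2)/2*(norm (g k))\<^sup>2 \<le> L*(real k+1)*D*norm (g k) + V k" for k
  proof -
    have i1: "inner (g k) (z k - zstar) \<ge> (1/L)*(norm (g k))\<^sup>2"
      using c1[of "z k" zstar] unfolding g_def zstar_sol by simp
    have i2: "inner (g k) (zstar - z 0) \<ge> - (norm (g k) * D)"
      using norm_cauchy_schwarz[of "- g k" "zstar - z 0"] unfolding D_def by (simp add: norm_minus_commute)
    have sp: "inner (g k) (z k - z 0) = inner (g k) (z k - zstar) + inner (g k) (zstar - z 0)"
      by (simp add: inner_diff_right)
    have "L*(real k+1)*((1/L)*(norm (g k))\<^sup>2 - norm (g k) * D) \<le> L*(real k+1)*inner (g k) (z k - z 0)"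
      using i1 i2 L_pos unfolding sp by (intro mult_left_mono) auto
    moreover have "L*(real k+1)*((1/L)*(norm (g k))\<^sup>2 - norm (g k) * D) = (real k+1)*(norm (g k))\<^sup>2 - L*(real k+1)*D*norm (g k)"
      using Lne by (simp add: field_simps)
    moreover have "(real k+1)*(real k+2)/2*(norm (g k))\<^sup>2 = (real k+1)*(norm (g k))\<^sup>2 + real k*(real k+1)/2*(norm (g k))\<^sup>2"
      by (simp add: field_simps)
    ultimately show ?thesis unfolding V_def by linarith
  qed
  have main: "(norm (g k))\<^sup>2 * ((real k+1)*(real k+2)) \<le> (7*(L*D) + 10 * sqrt (Q k))\<^sup>2" for k
  proof (induction k rule: less_induct)
    case (less k)
    define r where "r = sqrt (Q k)"
    define M where "M = 7*(L*D) + 10*r"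
    have r0: "r \<ge> 0" unfolding r_def using Q0 by simp
    have rr: "r\<^sup>2 = Q k" unfolding r_def using Q0 by simp
    have M0: "M \<ge> 0" unfolding M_def using r0 LD0 by simp
    have xi: "(real i+1)*norm (g i) \<le> M" if "i < k" for i
    proof -
      have "(7*(L*D) + 10 * sqrt (Q i)) \<le> M"
        unfolding M_def r_def using Qmono[of i k] that by (simp add: real_sqrt_le_mono)
      then have "(7*(L*D) + 10 * sqrt (Q i))\<^sup>2 \<le> M\<^sup>2"
        using Q0[of i] LD0 by (intro power_mono) auto
      moreover have "((real i+1)*norm (g i))\<^sup>2 \<le> (norm (g i))\<^sup>2 * ((real i+1)*(real i+2))"
        by (rule sq_help)
      ultimately have "((real i+1)*norm (g i))\<^sup>2 \<le> M\<^sup>2" using less.IH[OF that] by linarith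
      then show ?thesis using M0 power2_le_imp_le by blast
    qed
    have term1: "(real i+1)*\<gamma> i*norm (g i) \<le> 10*((real i+1)\<^sup>2*(\<gamma> i)\<^sup>2) + M\<^sup>2/40 * (1/(real i+1)\<^sup>2)"
      if "i < k" for i
    proof -
      have "(real i+1)*\<gamma> i*norm (g i) = \<gamma> i * ((real i+1)*norm (g i))" by simp
      also have "\<dots> \<le> \<gamma> i * M" using xi[OF that] gamma_nonneg[of i] by (simp add: mult_left_mono)
      also have "\<dots> = ((real i+1)*\<gamma> i) * (M/(real i+1))" by simp
      also have "\<dots> \<le> 10*((real i+1)*\<gamma> i)\<^sup>2 + (M/(real i+1))\<^sup>2/40" by (rule amgm)
      also have "\<dots> = 10*((real i+1)\<^sup>2*(\<gamma> i)\<^sup>2) + M\<^sup>2/40 * (1/(real i+1)\<^sup>2)"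
        by (simp add: power_mult_distrib power_divide)
      finally show ?thesis .
    qed
    have term2: "(real i+1)*(real i+2)/2*(\<gamma> i)\<^sup>2 \<le> (real i+1)\<^sup>2*(\<gamma> i)\<^sup>2" for i
    proof -
      have "(real i+1)*(real i+2)/2 \<le> (real i+1)\<^sup>2" by (simp add: power2_eq_square field_simps)
      then show ?thesis by (rule mult_right_mono) simp
    qed
    have "V k \<le> (\<Sum>i<k. 11*((real i+1)\<^sup>2*(\<gamma> i)\<^sup>2) + M\<^sup>2/40 * (1/(real i+1)\<^sup>2))"
    proof -
      have "(\<Sum>i<k. (real i+1)*(real i+2)/2*(\<gamma> i)\<^sup>2 + (real i+1)*\<gamma> i*norm (g i))
          \<le> (\<Sum>i<k. 11*((real i+1)\<^sup>2*(\<gamma> i)\<^sup>2) + M\<^sup>2/40 * (1/(real i+1)\<^sup>2))"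
      proof (rule sum_mono)
        fix i assume "i \<in> {..<k}"
        then have "i < k" by simp
        from term1[OF this] term2[of i] show "(real i+1)*(real i+2)/2*(\<gamma> i)\<^sup>2 + (real i+1)*\<gamma> i*norm (g i)
          \<le> 11*((real i+1)\<^sup>2*(\<gamma> i)\<^sup>2) + M\<^sup>2/40 * (1/(real i+1)\<^sup>2)" by linarith
      qed
      then show ?thesis using Vsum[of k] by linarith
    qed
    also have "\<dots> = 11 * Q k + M\<^sup>2/40 * (\<Sum>i<k. 1/(real i+1)\<^sup>2)"
      unfolding Q_def by (simp add: sum.distrib sum_distrib_left)
    also have "\<dots> \<le> 11 * Q k + M\<^sup>2/40 * 2"
      using sum_inv_sq[of k] by (intro add_left_mono mult_left_mono) (auto intro: order_trans)
    finally have Vk: "V k \<le> 11 * r\<^sup>2 + M\<^sup>2/20" unfolding rr by simp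
    define P where "P = (real k+1)*(real k+2)"
    define x where "x = norm (g k)"
    have x0: "x \<ge> 0" unfolding x_def by simp
    have low: "P/2*x\<^sup>2 \<le> L*D*((real k+1)*x) + 11 * r\<^sup>2 + M\<^sup>2/20"
      using lower[of k] Vk unfolding P_def x_def by (simp add: algebra_simps)
    show ?case
    proof (rule ccontr)
      assume na: "\<not> ?case"
      define s where "s = sqrt P"
      have P0: "P > 0" unfolding P_def by simp
      have ss: "s\<^sup>2 = P" unfolding s_def using P0 by simp
      have s0: "s \<ge> 0" unfolding s_def using P0 by simp
      have ks: "real k + 1 \<le> s" unfolding s_def P_def
        by (rule real_le_rsqrt) (simp add: power2_eq_square)
      define y where "y = x * s"
      have y0: "y \<ge> 0" unfolding y_def using x0 s0 by simp
      have "y\<^sup>2 > M\<^sup>2" using na unfolding y_def power_mult_distrib ss x_def P_def M_def r_def by simp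
      then have yM: "y > M" using M0 y0 by (meson not_less power_mono)
      have "(real k+1)*x \<le> y" unfolding y_def using mult_left_mono[OF ks x0] by (metis mult.commute)
      then have "L*D*((real k+1)*x) \<le> L*D*y" using LD0 by (simp add: mult_left_mono)
      moreover have "P/2*x\<^sup>2 = y\<^sup>2/2" unfolding y_def power_mult_distrib ss by simp
      ultimately have "y\<^sup>2/2 \<le> (L*D)*y + 11 * r\<^sup>2 + (7*(L*D)+10*r)\<^sup>2/20"
        using low unfolding M_def by linarith
      moreover have "y > 7*(L*D) + 10*r" using yM unfolding M_def .
      ultimately show False using quad_contra[OF LD0 r0] by blast
    qed
  qed
  have first: "(norm (G (z k)))\<^sup>2 \<le> (7*L*D + 10 * sqrt (Q k))\<^sup>2 / ((real k + 1) * (real k + 2))"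
    using main[of k] unfolding g_def by (simp add: pos_le_divide_eq mult.assoc)
  have zs: "(real k+1)*norm (z k - zstar) \<le> (real k+1)*D + (\<Sum>i<k. (real i+1)*\<gamma> i)/L" for k
  proof (induction k)
    case 0 then show ?case unfolding D_def by simp
  next
    case (Suc k)
    define c where "c = (real k+1)/(real k+2)"
    have c0: "c \<ge> 0" "c \<le> 1" unfolding c_def by auto
    have eq: "z (Suc k) - zstar = (1 - c) *\<^sub>R (z 0 - zstar) + c *\<^sub>R ((z k - zstar) - (1/L) *\<^sub>R (g k - G zstar))
        - (c/L) *\<^sub>R e k"
    proof -
      have "z (Suc k) = z 0 + (c *\<^sub>R (z k - z 0) - (c/L) *\<^sub>R (g k + e k))"
        using zrec[of k] unfolding c_def by (simp add: algebra_simps)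
      then show ?thesis unfolding zstar_sol by (simp add: algebra_simps)
    qed
    have ne1: "norm ((z k - zstar) - (1/L) *\<^sub>R (g k - G zstar)) \<le> norm (z k - zstar)"
      using nonexp_step[OF L_pos c1[of "z k" zstar]] unfolding g_def .
    have "norm (z (Suc k) - zstar) \<le> (1 - c) * D + c * norm (z k - zstar) + (c/L) * \<gamma> k"
    proof -
      have "norm (z (Suc k) - zstar) \<le> norm ((1 - c) *\<^sub>R (z 0 - zstar)) + norm (c *\<^sub>R ((z k - zstar) - (1/L) *\<^sub>R (g k - G zstar)))
          + norm ((c/L) *\<^sub>R e k)"
        unfolding eq using norm_triangle_ineq4[of "(1 - c) *\<^sub>R (z 0 - zstar) + c *\<^sub>R ((z k - zstar) - (1/L) *\<^sub>R (g k - G zstar))" "(c/L) *\<^sub>R e k"]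
          norm_triangle_ineq[of "(1 - c) *\<^sub>R (z 0 - zstar)" "c *\<^sub>R ((z k - zstar) - (1/L) *\<^sub>R (g k - G zstar))"]
        by linarith
      also have "\<dots> \<le> (1 - c) * D + c * norm (z k - zstar) + (c/L) * \<gamma> k"
      proof -
        have "norm ((1 - c) *\<^sub>R (z 0 - zstar)) = (1 - c) * D" using c0 unfolding D_def by simp
        moreover have "norm (c *\<^sub>R ((z k - zstar) - (1/L) *\<^sub>R (g k - G zstar))) \<le> c * norm (z k - zstar)"
          using c0 ne1 by (simp add: mult_left_mono)
        moreover have "norm ((c/L) *\<^sub>R e k) \<le> (c/L) * \<gamma> k"
          using c0 L_pos mult_left_mono[OF ne[of k], of "c/L"] by simp
        ultimately show ?thesis by linarith
      qed
      finally show ?thesis .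
    qed
    then have "(real k+2)*norm (z (Suc k) - zstar) \<le> (real k+2)*((1 - c) * D + c * norm (z k - zstar) + (c/L) * \<gamma> k)"
      by (simp add: mult_left_mono)
    also have "\<dots> = ((real k+2)*(1-c))*D + ((real k+2)*c)*norm (z k - zstar) + ((real k+2)*c)*\<gamma> k/L"
      by (simp add: algebra_simps)
    also have "\<dots> = D + (real k+1)*norm (z k - zstar) + (real k+1)*\<gamma> k/L"
    proof -
      have "(real k+2)*(1-c) = 1" "(real k+2)*c = real k+1" unfolding c_def by (simp_all add: field_simps)
      then show ?thesis by simp
    qed
    finally have "(real k+2)*norm (z (Suc k) - zstar) \<le> D + (real k+1)*norm (z k - zstar) + (real k+1)*\<gamma> k/L" .
    moreover have "(real k + 2)*D = D + (real k + 1)*D" by (simp add: algebra_simps)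
    moreover have "(\<Sum>i<Suc k. (real i+1)*\<gamma> i)/L = (\<Sum>i<k. (real i+1)*\<gamma> i)/L + (real k+1)*\<gamma> k/L"
      by (simp add: add_divide_distrib)
    moreover have rs: "real (Suc k) + 1 = real k + 2" by simp
    ultimately show ?case using Suc unfolding rs by linarith
  qed
  have cs: "(\<Sum>i<k. (real i+1)*\<gamma> i) \<le> (real k+1) * sqrt (Q k)" for k
  proof -
    have "(\<Sum>i<k. (real i+1)*\<gamma> i)\<^sup>2 \<le> (\<Sum>i<k. (1::real)\<^sup>2) * (\<Sum>i<k. ((real i+1)*\<gamma> i)\<^sup>2)"
      using Cauchy_Schwarz_ineq_sum[of "\<lambda>i. 1::real" "\<lambda>i. (real i+1)*\<gamma> i" "{..<k}"] by simp
    also have "\<dots> = real k * Q k" unfolding Q_def by (simp add: power_mult_distrib)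
    also have "\<dots> \<le> (real k+1)\<^sup>2 * Q k"
    proof (rule mult_right_mono)
      have "0 \<le> real k * real k" by simp
      then show "real k \<le> (real k+1)\<^sup>2" by (simp add: power2_eq_square algebra_simps)
    qed (rule Q0)
    also have "\<dots> = ((real k+1) * sqrt (Q k))\<^sup>2" using Q0[of k] by (simp add: power_mult_distrib)
    finally show ?thesis by (rule power2_le_imp_le) (use Q0[of k] in auto)
  qed
  define r where "r = sqrt (Q k)"
  define r' where "r' = sqrt (Q (Suc k))"
  define x where "x = norm (g k)"
  have r0: "r \<ge> 0" unfolding r_def using Q0 by simp
  have rr': "r \<le> r'" unfolding r_def r'_def using Qmono[of k "Suc k"] by (simp add: real_sqrt_le_mono)
  have u: "L * norm (z k - z 0) \<le> 2*(L*D) + r"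
  proof -
    have "(real k+1)*norm (z k - zstar) \<le> (real k+1)*D + (real k+1)*r/L"
    proof -
      have "(\<Sum>i<k. (real i+1)*\<gamma> i)/L \<le> ((real k+1)*r)/L"
        using cs[of k] L_pos unfolding r_def by (intro divide_right_mono) auto
      then show ?thesis using zs[of k] by simp
    qed
    also have "\<dots> = (real k+1)*(D + r/L)" by (simp add: algebra_simps add_divide_distrib)
    finally have "norm (z k - zstar) \<le> D + r/L"
      by (rule mult_left_le_imp_le) simp
    moreover have "norm (z k - z 0) \<le> norm (z k - zstar) + D"
      unfolding D_def using norm_triangle_ineq[of "z k - zstar" "zstar - z 0"]
      by (simp add: norm_minus_commute)
    ultimately have "norm (z k - z 0) \<le> 2*D + r/L" by simp
    then have "L * norm (z k - z 0) \<le> L*(2*D + r/L)" using L_pos by (simp add: mult_left_mono)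
    moreover have "L*(2*D + r/L) = 2*(L*D) + r" using Lne by (simp add: field_simps)
    ultimately show ?thesis by linarith
  qed
  have kx: "(real k+1)*x \<le> 7*(L*D) + 10*r"
  proof -
    have "((real k+1)*x)\<^sup>2 \<le> x\<^sup>2 * ((real k+1)*(real k+2))"
      by (rule sq_help)
    then have "((real k+1)*x)\<^sup>2 \<le> (7*(L*D) + 10*r)\<^sup>2" using main[of k] unfolding x_def r_def by linarith
    then show ?thesis by (rule power2_le_imp_le) (use r0 LD0 in simp)
  qed
  have kg: "(real k+1)*\<gamma> k \<le> r'"
  proof -
    have "((real k+1)*\<gamma> k)\<^sup>2 \<le> Q (Suc k)" unfolding QSuc using Q0[of k] by (simp add: power_mult_distrib)
    then show ?thesis unfolding r'_def by (rule real_le_rsqrt)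
  qed
  define c where "c = (real k+1)/(real k+2)"
  have dform: "z (Suc k) - z k = (c - 1) *\<^sub>R (z k - z 0) - (c/L) *\<^sub>R (g k + e k)"
  proof -
    have "z (Suc k) - z k = (z (Suc k) - z 0) - (z k - z 0)" by simp
    then show ?thesis unfolding zrec[of k] c_def by (simp add: algebra_simps)
  qed
  have dn: "norm (z (Suc k) - z k) \<le> (1 - c) * norm (z k - z 0) + (c/L) * (x + \<gamma> k)"
  proof -
    have c0: "c \<ge> 0" "c \<le> 1" unfolding c_def by auto
    have "norm (g k + e k) \<le> x + \<gamma> k" unfolding x_def using ne[of k] norm_triangle_ineq[of "g k" "e k"] by simp
    then have "norm ((c/L) *\<^sub>R (g k + e k)) \<le> (c/L) * (x + \<gamma> k)"
      using c0 L_pos mult_left_mono[of "norm (g k + e k)" "x + \<gamma> k" "c/L"] by simp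
    moreover have "norm ((c - 1) *\<^sub>R (z k - z 0)) = (1 - c) * norm (z k - z 0)" using c0 by simp
    ultimately show ?thesis unfolding dform
      using norm_triangle_ineq4[of "(c - 1) *\<^sub>R (z k - z 0)" "(c/L) *\<^sub>R (g k + e k)"] by linarith
  qed
  have Ld: "L*(real k+2)*norm (z (Suc k) - z k) \<le> 2*(7*(L*D) + 11*r')"
  proof -
    have "L*(real k+2)*norm (z (Suc k) - z k) \<le> L*(real k+2)*((1 - c) * norm (z k - z 0) + (c/L) * (x + \<gamma> k))"
      using dn L_pos by (simp add: mult_left_mono)
    also have "\<dots> = (L*(real k+2)*(1 - c)) * norm (z k - z 0) + (L*(real k+2)*(c/L)) * x + (L*(real k+2)*(c/L)) * \<gamma> k"
      by (simp add: algebra_simps)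
    also have "\<dots> = L * norm (z k - z 0) + (real k+1)*x + (real k+1)*\<gamma> k"
    proof -
      have q1: "(real k+2)*c = real k+1" "(real k+2)*(1-c) = 1" unfolding c_def by (simp_all add: field_simps)
      have "L*(real k+2)*(1 - c) = L*((real k+2)*(1 - c))" "L*(real k+2)*(c/L) = ((real k+2)*c) * (L/L)"
        by (simp_all add: algebra_simps)
      then have "L*(real k+2)*(1 - c) = L" "L*(real k+2)*(c/L) = real k + 1"
        unfolding q1 using Lne by simp_all
      then show ?thesis by simp
    qed
    finally show ?thesis using u kx kg rr' r0 LD0 by (smt (verit))
  qed
  have second: "(norm (z (Suc k) - z k))\<^sup>2 \<le> 8 * (7*L*D + 11*r')\<^sup>2 / (L\<^sup>2 * (real k + 1) * (real k + 2))"
  proof -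
    define n where "n = norm (z (Suc k) - z k)"
    have n0: "n \<ge> 0" unfolding n_def by simp
    define X where "X = 7*L*D + 11*r'"
    have "(L*(real k+2)*n)\<^sup>2 \<le> (2*X)\<^sup>2"
      using Ld n0 L_pos unfolding n_def X_def by (intro power_mono) (auto simp: mult.assoc)
    also have "\<dots> = 4 * X\<^sup>2" by (simp add: power_mult_distrib)
    finally have A: "(L*(real k+2)*n)\<^sup>2 \<le> 4 * X\<^sup>2" .
    have B1: "(L*(real k+2)*n)\<^sup>2 = (L\<^sup>2 * (real k+2) * n\<^sup>2) * (real k+2)"
      by (simp add: power2_eq_square algebra_simps)
    have B2: "L\<^sup>2 * (real k + 1) * (real k + 2) * n\<^sup>2 = (L\<^sup>2 * (real k+2) * n\<^sup>2) * (real k+1)"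
      by (simp add: algebra_simps)
    have "(L\<^sup>2 * (real k+2) * n\<^sup>2) * (real k+1) \<le> (L\<^sup>2 * (real k+2) * n\<^sup>2) * (real k+2)"
      by (intro mult_left_mono) auto
    then have "L\<^sup>2 * (real k + 1) * (real k + 2) * n\<^sup>2 \<le> 4 * X\<^sup>2" using A unfolding B1 B2 by linarith
    moreover have "0 \<le> X\<^sup>2" by simp
    ultimately have "L\<^sup>2 * (real k + 1) * (real k + 2) * n\<^sup>2 \<le> 8 * (7*L*D + 11*r')\<^sup>2"
      unfolding X_def by linarith
    moreover have "L\<^sup>2 * (real k + 1) * (real k + 2) > 0" using L_pos by simp
    ultimately show ?thesis unfolding n_def by (simp add: pos_le_divide_eq mult.commute)
  qed
  have QS: "Q (Suc k) = (\<Sum>i\<le>k. (real i + 1)\<^sup>2 * (\<gamma> i)\<^sup>2)" unfolding Q_def lessThan_Suc_atMost ..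
  show ?thesis using first second unfolding r'_def QS unfolding D_def Q_def by simp
qed

end
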